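(* Let $\mathcal{P}=\{1,\dots,M\}$, fix $i\in\mathcal{P}$, let $i'\notin\mathcal{P}$ be a new element (the replica of $i$), and put $\mathcal{P}^R=\mathcal{P}\cup\{i'\}$. Let $v(\cdot,\mathcal{P})\colon 2^{\mathcal{P}}\to\mathbb{R}$ and $v(\cdot,\mathcal{P}^R)\colon 2^{\mathcal{P}^R}\to\mathbb{R}$ be characteristic functions with $v(\mathcal{P},\mathcal{P})>0$ and $v(\mathcal{P}^R,\mathcal{P}^R)>0$, and let $a_i\in\mathbb{R}$. Assume: (1) $v(S,\mathcal{P})=v(S,\mathcal{P}^R)$ for all $S\subseteq\mathcal{P}$; (2) $v(S\cup\{i\},\mathcal{P}^R)-v(S,\mathcal{P}^R)\le a_i$ for every $S\subseteq\mathcal{P}^R\setminus\{i\}$ with $i'\in S$; (3) (supermodularity) $v(R\cup\{i\},\mathcal{P})-v(R,\mathcal{P})\le v(Q\cup\{i\},\mathcal{P})-v(Q,\mathcal{P})$ for all $R\subseteq Q\subseteq\mathcal{P}\setminus\{i\}$. Then $$\phi^R(i)\le \frac{\phi(i)\,v(\mathcal{P},\mathcal{P})+a_i}{2\,v(\mathcal{P}^R,\mathcal{P}^R)}.$$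
   Context: Normalized Shapley values: for the original market, $\phi(i)=\frac{1}{v(\mathcal{P},\mathcal{P})}\sum_{S\subseteq\mathcal{P}\setminus\{i\}}\frac{|S|!\,(M-|S|-1)!}{M!}\big(v(S\cup\{i\},\mathcal{P})-v(S,\mathcal{P})\big)$, and for the market with the replica (which has $M+1$ players), $\phi^R(i)=\frac{1}{v(\mathcal{P}^R,\mathcal{P}^R)}\sum_{S\subseteq\mathcal{P}^R\setminus\{i\}}\frac{|S|!\,(M-|S|)!}{(M+1)!}\big(v(S\cup\{i\},\mathcal{P}^R)-v(S,\mathcal{P}^R)\big)$. *)

theory Defs
  imports "HOL-Analysis.Analysis"
begin

definition norm_shapley :: "'a set \<Rightarrow> ('a set \<Rightarrow> real) \<Rightarrow> 'a \<Rightarrow> real" where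
  "norm_shapley N v i =
     (1 / v N) * (\<Sum>S \<in> Pow (N - {i}).
        (fact (card S) * fact (card N - card S - 1) / fact (card N)) * (v (S \<union> {i}) - v S))"

end

theory Submission
  imports Defs
begin


lemma group_card:
  fixes d :: "'a set \<Rightarrow> real"
  assumes "finite K"
  shows "(\<Sum>T\<in>Pow K. g (card T) * d T) = (\<Sum>t\<le>card K. g t * (\<Sum>T\<in>{T\<in>Pow K. card T = t}. d T))"
proof -
  have "(\<Sum>T\<in>Pow K. g (card T) * d T) = (\<Sum>t\<in>{..card K}. \<Sum>T\<in>{T\<in>Pow K. card T = t}. g (card T) * d T)"
    by (rule sum.group[symmetric]) (auto simp: assms card_mono)
  also have "... = (\<Sum>t\<le>card K. g t * (\<Sum>T\<in>{T\<in>Pow K. card T = t}. d T))"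
    by (auto simp: sum_distrib_left intro!: sum.cong)
  finally show ?thesis .
qed

lemma double_count:
  fixes d :: "'a set \<Rightarrow> real"
  assumes fin: "finite K" and mono: "\<And>T j. T \<subseteq> K \<Longrightarrow> j \<in> K - T \<Longrightarrow> d T \<le> d (insert j T)"
  shows "real (card K - t) * (\<Sum>T\<in>{T\<in>Pow K. card T = t}. d T) \<le> real (t+1) * (\<Sum>T\<in>{T\<in>Pow K. card T = t+1}. d T)"
proof -
  let ?A = "{T\<in>Pow K. card T = t}" and ?B = "{T\<in>Pow K. card T = t+1}"
  have fA: "finite ?A" "finite ?B" using fin by auto
  have "real (card K - t) * sum d ?A = (\<Sum>T\<in>?A. \<Sum>j\<in>K-T. d T)"
    unfolding sum_distrib_left
  proof (rule sum.cong)
    fix T assume "T \<in> ?A"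
    then have "card (K - T) = card K - t" using fin by (auto simp: card_Diff_subset finite_subset)
    then show "real (card K - t) * d T = (\<Sum>j\<in>K-T. d T)" by simp
  qed simp
  also have "... \<le> (\<Sum>T\<in>?A. \<Sum>j\<in>K-T. d (insert j T))"
    by (intro sum_mono) (auto intro: mono)
  also have "... = (\<Sum>(T,j)\<in>Sigma ?A (\<lambda>T. K-T). d (insert j T))"
    by (rule sum.Sigma) (use fin in auto)
  also have "... = (\<Sum>(U,j)\<in>Sigma ?B (\<lambda>U. U). d U)"
  proof (rule sum.reindex_bij_witness[where i="\<lambda>(U,j). (U - {j}, j)" and j="\<lambda>(T,j). (insert j T, j)"])
    fix p assume "p \<in> Sigma ?B (\<lambda>U. U)"
    then show "(case (case p of (U, j) \<Rightarrow> (U - {j}, j)) of (T, j) \<Rightarrow> (insert j T, j)) = p"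
      by auto
  next
    fix p assume p: "p \<in> Sigma ?B (\<lambda>U. U)"
    then obtain U j where pe: "p = (U,j)" "U \<subseteq> K" "card U = t+1" "j \<in> U" by auto
    then have "finite U" using fin finite_subset by blast
    then show "(case p of (U, j) \<Rightarrow> (U - {j}, j)) \<in> Sigma ?A (\<lambda>T. K-T)"
      using pe by auto
  next
    fix p assume "p \<in> Sigma ?A (\<lambda>T. K-T)"
    then show "(case (case p of (T, j) \<Rightarrow> (insert j T, j)) of (U, j) \<Rightarrow> (U - {j}, j)) = p"
      by auto
  next
    fix p assume p: "p \<in> Sigma ?A (\<lambda>T. K-T)"
    then obtain T j where pe: "p = (T,j)" "T \<subseteq> K" "card T = t" "j \<in> K" "j \<notin> T" by auto
    then have "finite T" using fin finite_subset by blast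
    then show "(case p of (T, j) \<Rightarrow> (insert j T, j)) \<in> Sigma ?B (\<lambda>U. U)"
      using pe by auto
    show "(case (case p of (T, j) \<Rightarrow> (insert j T, j)) of (U, j) \<Rightarrow> d U) = (case p of (T, j) \<Rightarrow> d (insert j T))"
      using pe by auto
  qed
  also have "... = (\<Sum>U\<in>?B. \<Sum>j\<in>U. d U)"
    by (rule sum.Sigma[symmetric]) (use fin in \<open>auto intro: finite_subset\<close>)
  also have "... = real (t+1) * sum d ?B"
    unfolding sum_distrib_left by (rule sum.cong) auto
  finally show ?thesis .
qed

lemma key:
  fixes d :: "'a set \<Rightarrow> real"
  assumes fin: "finite K" and mono: "\<And>T j. T \<subseteq> K \<Longrightarrow> j \<in> K - T \<Longrightarrow> d T \<le> d (insert j T)"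
  shows "(\<Sum>T\<in>Pow K. (fact (card T) * fact (card K - card T) * (real (card K) - 2 * real (card T))) * d T) \<le> 0"
proof -
  define n where "n = card K"
  define s where "s t = (\<Sum>T\<in>{T\<in>Pow K. card T = t}. d T)" for t
  define D where "D t = s t / real (n choose t)" for t
  have stepD: "D t \<le> D (Suc t)" if "t < n" for t
  proof -
    have dc: "real (n - t) * s t \<le> real (t+1) * s (t+1)"
      unfolding s_def n_def using double_count[OF fin mono] .
    have e: "Suc t * (n choose Suc t) = (n - t) * (n choose t)"
      using binomial_absorption binomial_absorb_comp by metis
    have c: "(n choose t) > 0" "(n choose Suc t) > 0" using that by auto
    have e': "real (t+1) * real (n choose Suc t) = real (n - t) * real (n choose t)"
      using e by (metis Suc_eq_plus1 of_nat_mult)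
    have p: "real (n - t) > 0" using that by simp
    have cp: "real (n choose t) > 0" "real (n choose Suc t) > 0" using c by auto
    have "D t = (real (n - t) * s t) / (real (n - t) * real (n choose t))"
      unfolding D_def using p by simp
    also have "... = (real (n - t) * s t) / (real (t+1) * real (n choose Suc t))" using e' by simp
    also have "... \<le> (real (t+1) * s (t+1)) / (real (t+1) * real (n choose Suc t))"
      using dc cp by (intro divide_right_mono) auto
    also have "... = D (Suc t)" unfolding D_def by simp
    finally show ?thesis .
  qed
  have monoD: "D t \<le> D u" if "t \<le> u" "u \<le> n" for t u
    using that
  proof (induction u rule: dec_induct)
    case base then show ?case by simp
  next
    case (step m) then show ?case using stepD[of m] by simp
  qed
  let ?F = "(\<Sum>t\<le>n. (real n - 2 * real t) * D t)"
  have rev: "?F = (\<Sum>t\<le>n. (real n - 2 * real (n - t)) * D (n - t))"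
    by (rule sum.reindex_bij_witness[where i="\<lambda>t. n - t" and j="\<lambda>t. n - t"]) auto
  have "2 * ?F = (\<Sum>t\<le>n. (real n - 2 * real t) * (D t - D (n - t)))"
    apply (subst mult_2, subst (2) rev)
    apply (subst sum.distrib[symmetric])
    apply (rule sum.cong, simp)
    apply (simp add: of_nat_diff algebra_simps)
    done
  also have "... \<le> 0"
  proof (rule sum_nonpos)
    fix t assume t: "t \<in> {..n}"
    show "(real n - 2 * real t) * (D t - D (n - t)) \<le> 0"
    proof (cases "2 * t \<le> n")
      case True
      then have "D t \<le> D (n - t)" using monoD t by auto
      then show ?thesis using True by (intro mult_nonneg_nonpos) auto
    next
      case False
      then have "D (n - t) \<le> D t" using monoD t by auto
      then show ?thesis using False by (intro mult_nonpos_nonneg) auto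
    qed
  qed
  finally have F: "?F \<le> 0" by simp
  have "(\<Sum>T\<in>Pow K. (fact (card T) * fact (card K - card T) * (real (card K) - 2 * real (card T))) * d T)
     = (\<Sum>t\<le>n. (fact t * fact (n - t) * (real n - 2 * real t)) * s t)"
    unfolding n_def s_def by (rule group_card[OF fin])
  also have "... = (\<Sum>t\<le>n. fact n * ((real n - 2 * real t) * D t))"
  proof (rule sum.cong)
    fix t assume "t \<in> {..n}"
    then have "fact t * fact (n - t) * (n choose t) = fact n" by (intro binomial_fact_lemma) simp
    then have "real (fact t * fact (n - t) * (n choose t)) = real (fact n)" by (rule arg_cong)
    then have fn: "(fact n :: real) = fact t * fact (n - t) * real (n choose t)"
      by (simp only: of_nat_mult of_nat_fact)
    have C: "real (n choose t) > 0" using \<open>t \<in> {..n}\<close> by simp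
    show "(fact t * fact (n - t) * (real n - 2 * real t)) * s t = fact n * ((real n - 2 * real t) * D t)"
      unfolding D_def fn using C by (simp add: field_simps)
  qed simp
  also have "... = fact n * ?F" by (simp add: sum_distrib_left)
  also have "... \<le> 0" using F by (simp add: mult_nonneg_nonpos)
  finally show ?thesis .
qed

lemma gauss_real: "(\<Sum>t\<le>n. real (t+1)) = real (n+1) * real (n+2) / 2"
  by (induction n) (auto simp: field_simps)

lemma weight_sum:
  assumes fin: "finite K"
  shows "(\<Sum>T\<in>Pow K. fact (card T + 1) * fact (card K - card T) / fact (card K + 2) * (1::real)) = 1/2"
proof -
  define n where "n = card K"
  have "(\<Sum>T\<in>Pow K. fact (card T + 1) * fact (card K - card T) / fact (card K + 2) * (1::real))
     = (\<Sum>t\<le>n. fact (t + 1) * fact (n - t) / fact (n + 2) * (\<Sum>T\<in>{T\<in>Pow K. card T = t}. (1::real)))"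
    unfolding n_def by (rule group_card[OF fin, where g="\<lambda>t. fact (t + 1) * fact (card K - t) / fact (card K + 2)"])
  also have "... = (\<Sum>t\<le>n. real (t+1) / (real (n+1) * real (n+2)))"
  proof (rule sum.cong)
    fix t assume t: "t \<in> {..n}"
    have "card {T\<in>Pow K. card T = t} = n choose t"
      using n_subsets[OF fin, of t] unfolding n_def by (simp add: Pow_def)
    then have c: "(\<Sum>T\<in>{T\<in>Pow K. card T = t}. (1::real)) = real (n choose t)" by simp
    have "t \<le> n" using t by simp
    then have "fact t * fact (n - t) * (n choose t) = fact n" by (intro binomial_fact_lemma)
    then have "real (fact t * fact (n - t) * (n choose t)) = real (fact n)" by (rule arg_cong)
    then have fn: "(fact n :: real) = fact t * fact (n - t) * real (n choose t)"
      by (simp only: of_nat_mult of_nat_fact)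
    have f2: "(fact (n+2) :: real) = real (n+2) * real (n+1) * fact n"
      by (simp add: fact_Suc algebra_simps)
    have f1: "(fact (t+1) :: real) = real (t+1) * fact t" by (simp add: fact_Suc algebra_simps)
    have pos: "(fact t :: real) > 0" "(fact (n - t) :: real) > 0" "real (n choose t) > 0" using \<open>t \<le> n\<close> by auto
    show "fact (t + 1) * fact (n - t) / fact (n + 2) * (\<Sum>T\<in>{T\<in>Pow K. card T = t}. (1::real))
        = real (t+1) / (real (n+1) * real (n+2))"
    proof -
      define P where "P = (fact t * fact (n - t) * real (n choose t) :: real)"
      have P: "P > 0" using pos unfolding P_def by simp
      have "fact (t + 1) * fact (n - t) / fact (n + 2) * real (n choose t)
          = (real (t+1) * P) / ((real (n+1) * real (n+2)) * P)"
        unfolding f1 f2 fn P_def by (simp add: algebra_simps)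
      also have "... = real (t+1) / (real (n+1) * real (n+2))"
        by (rule nonzero_mult_divide_mult_cancel_right) (use P in simp)
      finally show ?thesis unfolding c .
    qed
  qed simp
  also have "... = (\<Sum>t\<le>n. real (t+1)) / (real (n+1) * real (n+2))"
    by (simp add: sum_divide_distrib)
  also have "... = 1/2" unfolding gauss_real
  proof -
    have aux: "x / 2 / x = 1/2" if "(x::real) \<noteq> 0" for x using that by simp
    show "real (n + 1) * real (n + 2) / 2 / (real (n + 1) * real (n + 2)) = 1 / 2"
      by (rule aux) simp
  qed
  finally show ?thesis .
qed

lemma coef:
  assumes "c \<le> n"
  shows "2 * (fact c * fact (n + 2 - c - 1) / fact (n + 2)) - fact c * fact (n + 1 - c - 1) / fact (n + 1)
       = (fact c * fact (n - c) * (real n - 2 * real c)) / (fact (n + 2) :: real)"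
proof -
  have a: "n + 2 - c - 1 = Suc (n - c)" "n + 1 - c - 1 = n - c" using assms by auto
  have f2: "(fact (n+2) :: real) = real (n+2) * fact (n+1)"
    by (simp add: fact_Suc algebra_simps)
  have f3: "(fact (Suc (n - c)) :: real) = real (n + 1 - c) * fact (n - c)"
    using assms by (simp add: fact_Suc Suc_diff_le)
  have "real (n + 1 - c) = real n + 1 - real c" using assms by (simp add: of_nat_diff)
  have f1: "(fact (n+1) :: real) = real (n+1) * fact n"
    by (simp add: fact_Suc algebra_simps)
  have alg: "2 * (G * ((N + 1 - C) * F) / ((N + 2) * ((N + 1) * fn))) - G * F / ((N + 1) * fn)
           = G * F * (N - 2 * C) / ((N + 2) * ((N + 1) * fn))"
    if "fn > 0" "N \<ge> 0" for G F N C fn :: real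
  proof -
    define Dn where "Dn = (N + 2) * ((N + 1) * fn)"
    have nz: "N + 2 \<noteq> 0" using that by auto
    have e: "G * F / ((N + 1) * fn) = (G * F * (N + 2)) / Dn"
      unfolding Dn_def using nz by (simp only: mult.commute[of "N+2"] mult.assoc nonzero_mult_divide_mult_cancel_right[OF nz]) (simp add: ac_simps)
    have "2 * (G * ((N + 1 - C) * F) / Dn) - (G * F * (N + 2)) / Dn
        = (2 * (G * ((N + 1 - C) * F)) - G * F * (N + 2)) / Dn"
      by (simp add: diff_divide_distrib)
    also have "2 * (G * ((N + 1 - C) * F)) - G * F * (N + 2) = G * F * (N - 2 * C)"
      by (simp add: algebra_simps)
    finally show ?thesis unfolding e Dn_def[symmetric] .
  qed
  show ?thesis unfolding a f2 f3 f1 \<open>real (n + 1 - c) = real n + 1 - real c\<close>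
    using alg[where G="fact c" and F="fact (n - c)" and N="real n" and C="real c" and fn="fact n"] by (simp add: add.commute)
qed

theorem mainTheorem1:
  fixes M :: nat and i i' :: nat
    and v vR :: "nat set \<Rightarrow> real" and a_i :: real
  assumes hi: "i \<in> {1..M}"
    and hi': "i' \<notin> {1..M}"
    and hvP: "v {1..M} > 0"
    and hvR: "vR (insert i' {1..M}) > 0"
    and h1: "\<And>S. S \<subseteq> {1..M} \<Longrightarrow> v S = vR S"
    and h2: "\<And>S. S \<subseteq> insert i' {1..M} - {i} \<Longrightarrow> i' \<in> S \<Longrightarrow>
               vR (S \<union> {i}) - vR S \<le> a_i"
    and h3: "\<And>R Q. R \<subseteq> Q \<Longrightarrow> Q \<subseteq> {1..M} - {i} \<Longrightarrow>
               v (R \<union> {i}) - v R \<le> v (Q \<union> {i}) - v Q"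
  shows "norm_shapley (insert i' {1..M}) vR i
           \<le> (norm_shapley {1..M} v i * v {1..M} + a_i) / (2 * vR (insert i' {1..M}))"
proof -
  obtain n where Mn: "M = Suc n" using hi by (cases M) auto
  define K where "K = {1..M} - {i}"
  define NR where "NR = insert i' {1..M}"
  define d where "d S = v (S \<union> {i}) - v S" for S
  have finK: "finite K" unfolding K_def by simp
  have cK: "card K = n" unfolding K_def using hi Mn by simp
  have cNR: "card NR = n + 2" unfolding NR_def using hi' Mn by simp
  have cN: "card {1..M} = n + 1" using Mn by simp
  have ii': "i' \<noteq> i" using hi hi' by auto
  have i'K: "i' \<notin> K" unfolding K_def using hi' by auto
  have NRi: "NR - {i} = insert i' K" unfolding NR_def K_def using ii' by auto
  have monod: "d T \<le> d (insert j T)" if "T \<subseteq> K" "j \<in> K - T" for T j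
    unfolding d_def using h3[of T "insert j T"] that unfolding K_def by auto
  define w where "w c = fact c * fact (card NR - c - 1) / (fact (card NR) :: real)" for c
  define X where "X = (\<Sum>S\<in>Pow (insert i' K). w (card S) * (vR (S \<union> {i}) - vR S))"
  have nsR: "norm_shapley NR vR i = (1 / vR NR) * X"
    unfolding norm_shapley_def X_def w_def NRi ..
  define A where "A = (\<Sum>S\<in>Pow K. w (card S) * d S)"
  define B where "B = (\<Sum>T\<in>Pow K. w (card T + 1) * (vR (insert i' T \<union> {i}) - vR (insert i' T)))"
  have XAB: "X = A + B"
  proof -
    have "X = (\<Sum>S\<in>Pow K. w (card S) * (vR (S \<union> {i}) - vR S))
            + (\<Sum>S\<in>insert i' ` Pow K. w (card S) * (vR (S \<union> {i}) - vR S))"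
      unfolding X_def Pow_insert by (rule sum.union_disjoint) (use finK i'K in auto)
    also have "(\<Sum>S\<in>Pow K. w (card S) * (vR (S \<union> {i}) - vR S)) = A"
      unfolding A_def
    proof (rule sum.cong)
      fix S assume "S \<in> Pow K"
      then have "S \<subseteq> {1..M}" "S \<union> {i} \<subseteq> {1..M}" unfolding K_def using hi by auto
      then show "w (card S) * (vR (S \<union> {i}) - vR S) = w (card S) * d S"
        unfolding d_def using h1 by simp
    qed simp
    also have "(\<Sum>S\<in>insert i' ` Pow K. w (card S) * (vR (S \<union> {i}) - vR S)) = B"
      unfolding B_def
    proof (subst sum.reindex)
      show "inj_on (insert i') (Pow K)" using i'K by (auto simp: inj_on_def)
    next
      show "sum ((\<lambda>S. w (card S) * (vR (S \<union> {i}) - vR S)) \<circ> insert i') (Pow K) =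
            (\<Sum>T\<in>Pow K. w (card T + 1) * (vR (insert i' T \<union> {i}) - vR (insert i' T)))"
      proof (rule sum.cong)
        fix T assume "T \<in> Pow K"
        then have "finite T" "i' \<notin> T" using finK i'K finite_subset by auto
        then show "((\<lambda>S. w (card S) * (vR (S \<union> {i}) - vR S)) \<circ> insert i') T =
            w (card T + 1) * (vR (insert i' T \<union> {i}) - vR (insert i' T))" by simp
      qed simp
    qed
    finally show ?thesis .
  qed
  have wpos: "w c \<ge> 0" for c unfolding w_def by simp
  have Ble: "B \<le> a_i / 2"
  proof -
    have "B \<le> (\<Sum>T\<in>Pow K. w (card T + 1) * a_i)"
      unfolding B_def
    proof (rule sum_mono)
      fix T assume "T \<in> Pow K"
      then have "insert i' T \<subseteq> insert i' {1..M} - {i}" unfolding K_def using ii' by auto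
      then have "vR (insert i' T \<union> {i}) - vR (insert i' T) \<le> a_i" using h2 by auto
      then show "w (card T + 1) * (vR (insert i' T \<union> {i}) - vR (insert i' T)) \<le> w (card T + 1) * a_i"
        using wpos by (intro mult_left_mono) auto
    qed
    also have "... = a_i * (\<Sum>T\<in>Pow K. fact (card T + 1) * fact (card K - card T) / fact (card K + 2) * (1::real))"
      unfolding sum_distrib_left
    proof (rule sum.cong)
      fix T assume "T \<in> Pow K"
      then have "card T \<le> n" using finK cK card_mono by auto
      then have "card NR - (card T + 1) - 1 = card K - card T" using cNR cK by simp
      then show "w (card T + 1) * a_i = a_i * (fact (card T + 1) * fact (card K - card T) / fact (card K + 2) * 1)"
        unfolding w_def using cNR cK by simp
    qed simp
    also have "... = a_i / 2" using weight_sum[OF finK] by simp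
    finally show ?thesis .
  qed
  define Y where "Y = (\<Sum>S\<in>Pow K. fact (card S) * fact (card {1..M} - card S - 1) / fact (card {1..M}) * d S)"
  have nsN: "norm_shapley {1..M} v i * v {1..M} = Y"
    unfolding norm_shapley_def Y_def d_def K_def using hvP by simp
  have AY: "2 * A - Y \<le> 0"
  proof -
    have "2 * A - Y = (\<Sum>S\<in>Pow K. (fact (card S) * fact (card K - card S) * (real (card K) - 2 * real (card S))) * d S) / fact (n + 2)"
      unfolding A_def Y_def sum_distrib_left sum_subtractf[symmetric] sum_divide_distrib
    proof (rule sum.cong)
      fix S assume "S \<in> Pow K"
      then have c: "card S \<le> n" using finK cK card_mono by auto
      show "2 * (w (card S) * d S) - fact (card S) * fact (card {1..M} - card S - 1) / fact (card {1..M}) * d S =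
         fact (card S) * fact (card K - card S) * (real (card K) - 2 * real (card S)) * d S / fact (n + 2)"
      proof -
        have wc: "w (card S) = fact (card S) * fact (n + 2 - card S - 1) / fact (n + 2)"
          unfolding w_def cNR ..
        have "2 * (w (card S) * d S) - fact (card S) * fact (card {1..M} - card S - 1) / fact (card {1..M}) * d S
            = (2 * w (card S) - fact (card S) * fact (card {1..M} - card S - 1) / fact (card {1..M})) * d S"
          by (simp add: algebra_simps)
        also have "... = (fact (card S) * fact (n - card S) * (real n - 2 * real (card S))) / fact (n + 2) * d S"
          unfolding wc cN coef[OF c] ..
        finally show ?thesis unfolding cK by simp
      qed
    qed simp
    also have "... \<le> 0"
      using key[OF finK monod] by (intro divide_nonpos_pos) auto
    finally show ?thesis .
  qed
  have "X \<le> (Y + a_i) / 2" using XAB Ble AY by simp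
  then have "(1 / vR NR) * X \<le> (1 / vR NR) * ((Y + a_i) / 2)"
    using hvR unfolding NR_def by (intro mult_left_mono) auto
  then show ?thesis unfolding nsN NR_def[symmetric] nsR by simp
qed

end
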